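(* Fix $N\ge 1$, a statistic $c$ and a real $\theta>0$, and consider the weighted game of best choice. Let $A$ be the set of positive prefixes that are minimal with respect to prefix containment, i.e. positive prefixes $p$ such that no prefix $p'\neq p$ contained in $p$ is positive. Then every $\pi\in\mathfrak S_N$ is $p$-prefixed for exactly one $p\in A$, and the strategy "accept candidate $i$ as soon as the current prefix flattening $\pi^{(i)}$ belongs to $A$" maximizes the probability of winning among all strategies. The maximal winning probability equals $\bar S(1)$, where $1\in\mathfrak S_1$, and also equals $$\frac{\sum_{p\in A} D(p)\,S(p)}{\sum_{\sigma\in\mathfrak S_N}\theta^{c(\sigma)}}.$$
   Context: Permutations of $\{1,\dots,m\}$ are written in one-line notation $\pi=\pi_1\pi_2\cdots\pi_m$; $\mathfrak S_m$ is the set of all of them. An entry $\pi_j$ is a left-to-right maximum of $\pi$ if $\pi_j>\pi_i$ for all $i<j$. A statistic is a function $c:\bigcup_{m=1}^N\mathfrak S_m\to\mathbb Z_{\ge0}$. Fix $N\ge1$, a statistic $c$ and a real $\theta>0$. The weighted game of best choice is played as follows. A permutation $\pi\in\mathfrak S_N$ is chosen with probability $\theta^{c(\pi)}/\sum_{\sigma\in\mathfrak S_N}\theta^{c(\sigma)}$. For $i=1,\dots,N$, the player is shown the $i$-th prefix flattening $\pi^{(i)}$, which is the unique element of $\mathfrak S_i$ with the same relative order as $\pi_1,\dots,\pi_i$. Using only this information (note that $\pi^{(i)}$ determines $\pi^{(1)},\dots,\pi^{(i-1)}$), the player decides whether to accept candidate $i$, which ends the game, or to reject it. If candidates $1,\dots,N-1$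 are all rejected, candidate $N$ is accepted. The player wins iff the accepted candidate $i$ has $\pi_i=N$. A strategy is any such decision rule. A prefix is an element of $\bigcup_{m=1}^N\mathfrak S_m$. For $p\in\mathfrak S_m$ and $\pi\in\mathfrak S_N$: - $\pi$ is $p$-prefixed if $\pi^{(m)}=p$; - $\pi$ is $p$-winnable if $\pi$ is $p$-prefixed and $\pi_m=N$. A prefix $r\in\mathfrak S_n$ contains a prefix $p\in\mathfrak S_m$ ($m\le n$) if the $m$-th prefix flattening of $r$ equals $p$. Define: - $D(p)=\sum_{p\text{-prefixed }\pi}\theta^{c(\pi)}$; - the strike probability $S(p)=\big(\sum_{p\text{-winnable }\pi}\theta^{c(\pi)}\big)/D(p)$; - the open probability $S^{c}(p)$: it equals $0$ if $p\in\mathfrak S_N$, and for $p\in\mathfrak S_m$ with $m<N$ it equals $S^{c}(p)=\big(\sum_{q\in\mathfrak S_{m+1},\,q\text{ contains }p}D(q)\bar S(q)\big)/D(p)$; - the closed probability $\bar S(p)=\max(S(p),S^c(p))$. Equivalently, $S^c(p)$ (resp. $\bar S(p)$) is the largest conditional probability of winning, given that $\pi$ is $p$-prefixed, over strategies that reject candidates $1,\dots,m$ (resp. $1,\dots,m-1$). A prefix $p$ is positive if $S(p)\ge S^c(p)$, and negative otherwise. *)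

theory Defs
  imports Complex_Main
begin

definition perms :: "nat \<Rightarrow> nat list set" where
  "perms m = {xs. distinct xs \<and> set xs = {1..m}}"

definition flat :: "nat list \<Rightarrow> nat list" where
  "flat xs = map (\<lambda>x. card {y \<in> set xs. y \<le> x}) xs"

definition pflat :: "nat \<Rightarrow> nat list \<Rightarrow> nat list" where
  "pflat i xs = flat (take i xs)"

definition prefixes :: "nat \<Rightarrow> nat list set" where
  "prefixes N = (\<Union>m\<in>{1..N}. perms m)"

definition contains :: "nat list \<Rightarrow> nat list \<Rightarrow> bool" where
  "contains r p \<longleftrightarrow> length p \<le> length r \<and> pflat (length p) r = p"

definition prefixed :: "nat \<Rightarrow> nat list \<Rightarrow> nat list \<Rightarrow> bool" where
  "prefixed N p \<pi> \<longleftrightarrow> \<pi> \<in> perms N \<and> pflat (length p) \<pi> = p"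

definition winnable :: "nat \<Rightarrow> nat list \<Rightarrow> nat list \<Rightarrow> bool" where
  "winnable N p \<pi> \<longleftrightarrow> prefixed N p \<pi> \<and> \<pi> ! (length p - 1) = N"

definition Zsum :: "nat \<Rightarrow> (nat list \<Rightarrow> nat) \<Rightarrow> real \<Rightarrow> real" where
  "Zsum N c \<theta> = (\<Sum>\<sigma>\<in>perms N. \<theta> ^ c \<sigma>)"

definition Dw :: "nat \<Rightarrow> (nat list \<Rightarrow> nat) \<Rightarrow> real \<Rightarrow> nat list \<Rightarrow> real" where
  "Dw N c \<theta> p = (\<Sum>\<pi>\<in>{\<pi>\<in>perms N. prefixed N p \<pi>}. \<theta> ^ c \<pi>)"

definition Sstrike :: "nat \<Rightarrow> (nat list \<Rightarrow> nat) \<Rightarrow> real \<Rightarrow> nat list \<Rightarrow> real" where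
  "Sstrike N c \<theta> p = (\<Sum>\<pi>\<in>{\<pi>\<in>perms N. winnable N p \<pi>}. \<theta> ^ c \<pi>) / Dw N c \<theta> p"

definition ext :: "nat list \<Rightarrow> nat list set" where
  "ext p = {q \<in> perms (Suc (length p)). contains q p}"

text \<open>Auxiliary recursion: Sbar_rec k p is the closed probability of p when length p = N - k.\<close>
fun Sbar_rec :: "nat \<Rightarrow> (nat list \<Rightarrow> nat) \<Rightarrow> real \<Rightarrow> nat \<Rightarrow> nat list \<Rightarrow> real" where
  "Sbar_rec N c \<theta> 0 p = max (Sstrike N c \<theta> p) 0"
| "Sbar_rec N c \<theta> (Suc k) p =
     max (Sstrike N c \<theta> p)
         ((\<Sum>q\<in>ext p. Dw N c \<theta> q * Sbar_rec N c \<theta> k q) / Dw N c \<theta> p)"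

definition Sopen :: "nat \<Rightarrow> (nat list \<Rightarrow> nat) \<Rightarrow> real \<Rightarrow> nat list \<Rightarrow> real" where
  "Sopen N c \<theta> p =
     (if length p \<ge> N then 0
      else (\<Sum>q\<in>ext p. Dw N c \<theta> q * Sbar_rec N c \<theta> (N - Suc (length p)) q) / Dw N c \<theta> p)"

definition Sclosed :: "nat \<Rightarrow> (nat list \<Rightarrow> nat) \<Rightarrow> real \<Rightarrow> nat list \<Rightarrow> real" where
  "Sclosed N c \<theta> p = max (Sstrike N c \<theta> p) (Sopen N c \<theta> p)"

definition positive :: "nat \<Rightarrow> (nat list \<Rightarrow> nat) \<Rightarrow> real \<Rightarrow> nat list \<Rightarrow> bool" where
  "positive N c \<theta> p \<longleftrightarrow> Sstrike N c \<theta> p \<ge> Sopen N c \<theta> p"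

definition minpos :: "nat \<Rightarrow> (nat list \<Rightarrow> nat) \<Rightarrow> real \<Rightarrow> nat list set" where
  "minpos N c \<theta> = {p \<in> prefixes N. positive N c \<theta> p \<and>
      (\<forall>p'\<in>prefixes N. contains p p' \<and> p' \<noteq> p \<longrightarrow> \<not> positive N c \<theta> p')}"

text \<open>A strategy is a decision rule s on prefix flattenings (True = accept).
  The accepted candidate (1-based index): first i in 1..N with s(pi^(i)), or N.\<close>
definition accepted :: "nat \<Rightarrow> (nat list \<Rightarrow> bool) \<Rightarrow> nat list \<Rightarrow> nat" where
  "accepted N s \<pi> = (LEAST i. 1 \<le> i \<and> i \<le> N \<and> (s (pflat i \<pi>) \<or> i = N))"

definition wins :: "nat \<Rightarrow> (nat list \<Rightarrow> bool) \<Rightarrow> nat list \<Rightarrow> bool" where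
  "wins N s \<pi> \<longleftrightarrow> \<pi> ! (accepted N s \<pi> - 1) = N"

definition win_prob :: "nat \<Rightarrow> (nat list \<Rightarrow> nat) \<Rightarrow> real \<Rightarrow> (nat list \<Rightarrow> bool) \<Rightarrow> real" where
  "win_prob N c \<theta> s = (\<Sum>\<pi>\<in>{\<pi>\<in>perms N. wins N s \<pi>}. \<theta> ^ c \<pi>) / Zsum N c \<theta>"

end

theory Submission
  imports Defs
begin


lemma perms_length: "xs \<in> perms n \<Longrightarrow> length xs = n"
  unfolding perms_def using distinct_card by fastforce

lemma finite_perms: "finite (perms n)"
proof -
  have "perms n \<subseteq> {xs. set xs \<subseteq> {1..n} \<and> length xs = n}"
    using perms_length unfolding perms_def by auto
  thus ?thesis by (rule finite_subset) (simp add: finite_lists_length_eq)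
qed

lemma rank_strict: "finite S \<Longrightarrow> strict_mono_on S (\<lambda>x::nat. card {y\<in>S. y \<le> x})"
  unfolding strict_mono_on_def
proof (intro allI impI, elim conjE)
  fix x y assume "finite S" "x \<in> S" "y \<in> S" "x < y"
  have "y \<in> {z\<in>S. z \<le> y}" "y \<notin> {z\<in>S. z \<le> x}" using \<open>x<y\<close> \<open>y\<in>S\<close> by auto
  moreover have "{z\<in>S. z \<le> x} \<subseteq> {z\<in>S. z \<le> y}" using \<open>x<y\<close> by auto
  ultimately have "{z\<in>S. z \<le> x} \<subset> {z\<in>S. z \<le> y}" by blast
  thus "card {z\<in>S. z \<le> x} < card {z\<in>S. z \<le> y}"
    using \<open>finite S\<close> by (intro psubset_card_mono) auto
qed

lemma flat_map_strict:
  assumes "strict_mono_on (set xs) f"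
  shows "flat (map f xs) = flat xs"
proof -
  have inj: "inj_on f (set xs)" using assms strict_mono_on_imp_inj_on by blast
  have "card {y \<in> f ` set xs. y \<le> f x} = card {y\<in>set xs. y \<le> x}" if "x \<in> set xs" for x
  proof -
    have "{y \<in> f ` set xs. y \<le> f x} = f ` {y\<in>set xs. y \<le> x}"
    proof (intro equalityI subsetI)
      fix z assume "z \<in> {y \<in> f ` set xs. y \<le> f x}"
      then obtain y where y: "y \<in> set xs" "z = f y" "f y \<le> f x" by auto
      have "y \<le> x"
      proof (rule ccontr)
        assume "\<not> y \<le> x" hence "x < y" by simp
        hence "f x < f y" using assms y(1) that by (simp add: strict_mono_onD)
        thus False using y(3) by simp
      qed
      thus "z \<in> f ` {y\<in>set xs. y \<le> x}" using y by auto
    next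
      fix z assume "z \<in> f ` {y\<in>set xs. y \<le> x}"
      then obtain y where y: "y \<in> set xs" "y \<le> x" "z = f y" by auto
      have "f y \<le> f x" using strict_mono_on_leD[OF assms y(1) that y(2)] .
      thus "z \<in> {y \<in> f ` set xs. y \<le> f x}" using y by auto
    qed
    thus ?thesis using card_image inj by (metis (no_types, lifting) inj_on_subset mem_Collect_eq subsetI)
  qed
  thus ?thesis unfolding flat_def by (simp add: comp_def)
qed

lemma flat_perm:
  assumes "distinct xs" shows "flat xs \<in> perms (length xs)"
proof -
  define r where "r = (\<lambda>x::nat. card {y\<in>set xs. y \<le> x})"
  have sm: "strict_mono_on (set xs) r" unfolding r_def by (rule rank_strict) simp
  hence inj: "inj_on r (set xs)" using strict_mono_on_imp_inj_on by blast
  have d: "distinct (map r xs)" using assms inj by (simp add: distinct_map)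
  have sub: "r ` set xs \<subseteq> {1..length xs}"
  proof
    fix z assume "z \<in> r ` set xs"
    then obtain x where x: "x \<in> set xs" "z = r x" by auto
    have "{y\<in>set xs. y \<le> x} \<noteq> {}" using x by auto
    hence "1 \<le> z" using x unfolding r_def by (simp add: card_gt_0_iff Suc_le_eq)
    moreover have "z \<le> card (set xs)" unfolding x r_def by (rule card_mono) auto
    ultimately show "z \<in> {1..length xs}" using assms distinct_card by fastforce
  qed
  have "card (r ` set xs) = card {1..length xs}"
    using card_image[OF inj] assms distinct_card by fastforce
  hence "r ` set xs = {1..length xs}" using sub by (intro card_subset_eq) auto
  thus ?thesis using d unfolding perms_def flat_def r_def by auto
qed

lemma pflat_perm: "\<pi> \<in> perms N \<Longrightarrow> i \<le> N \<Longrightarrow> pflat i \<pi> \<in> perms i"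
  unfolding pflat_def using flat_perm[of "take i \<pi>"] perms_length[of \<pi> N]
  by (auto simp: perms_def min_def)

lemma length_flat[simp]: "length (flat xs) = length xs" by (simp add: flat_def)

lemma pflat_pflat: "j \<le> i \<Longrightarrow> pflat j (pflat i \<pi>) = pflat j \<pi>"
proof -
  assume "j \<le> i"
  define ys where "ys = take i \<pi>"
  define r where "r = (\<lambda>x::nat. card {y\<in>set ys. y \<le> x})"
  have "take j (flat ys) = map r (take j ys)" unfolding flat_def r_def by (simp add: take_map)
  moreover have "strict_mono_on (set (take j ys)) r"
    using rank_strict[of "set ys"] unfolding r_def
    using set_take_subset[of j ys] unfolding strict_mono_on_def by blast
  ultimately have "flat (take j (flat ys)) = flat (take j ys)" by (simp add: flat_map_strict)
  thus ?thesis using \<open>j\<le>i\<close> unfolding pflat_def ys_def by (simp add: min_def)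
qed

lemma flat_perm_id: "p \<in> perms m \<Longrightarrow> flat p = p"
proof -
  assume p: "p \<in> perms m"
  have "card {y\<in>set p. y \<le> x} = x" if "x \<in> set p" for x
  proof -
    have "{y\<in>set p. y \<le> x} = {1..x}" using p that unfolding perms_def by auto
    thus ?thesis by simp
  qed
  thus ?thesis unfolding flat_def by (simp add: map_idI)
qed

lemma pflat_self: "p \<in> perms m \<Longrightarrow> pflat m p = p"
  unfolding pflat_def using flat_perm_id perms_length by fastforce

lemma pflat_one: "\<pi> \<noteq> [] \<Longrightarrow> pflat 1 \<pi> = [1]"
proof -
  assume "\<pi> \<noteq> []"
  then obtain a l where "\<pi> = a # l" by (cases \<pi>) auto
  moreover have "{y. y = a \<and> y \<le> a} = {a}" by auto
  ultimately show ?thesis by (simp add: pflat_def flat_def)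
qed

lemma exists_prefixed:
  assumes "p \<in> perms m" "m \<le> N"
  shows "p @ [Suc m..<Suc N] \<in> perms N \<and> pflat m (p @ [Suc m..<Suc N]) = p"
proof -
  have "set p = {1..m}" "distinct p" "length p = m" using assms perms_length unfolding perms_def by auto
  thus ?thesis using assms pflat_self[OF assms(1)] unfolding perms_def pflat_def by auto
qed



definition acc :: "nat \<Rightarrow> (nat list \<Rightarrow> bool) \<Rightarrow> nat \<Rightarrow> nat list \<Rightarrow> nat" where
  "acc N s k \<pi> = (LEAST i. k \<le> i \<and> i \<le> N \<and> (s (pflat i \<pi>) \<or> i = N))"

definition W :: "nat \<Rightarrow> (nat list \<Rightarrow> bool) \<Rightarrow> nat \<Rightarrow> nat list \<Rightarrow> bool" where
  "W N s k \<pi> \<longleftrightarrow> \<pi> ! (acc N s k \<pi> - 1) = N"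

lemma acc_here: "k \<le> N \<Longrightarrow> s (pflat k \<pi>) \<or> k = N \<Longrightarrow> acc N s k \<pi> = k"
  unfolding acc_def by (rule Least_equality) auto

lemma acc_next: "k < N \<Longrightarrow> \<not> s (pflat k \<pi>) \<Longrightarrow> acc N s k \<pi> = acc N s (Suc k) \<pi>"
proof -
  assume a: "k < N" "\<not> s (pflat k \<pi>)"
  have "(\<lambda>i. k \<le> i \<and> i \<le> N \<and> (s (pflat i \<pi>) \<or> i = N)) = (\<lambda>i. Suc k \<le> i \<and> i \<le> N \<and> (s (pflat i \<pi>) \<or> i = N))"
  proof (rule ext)
    fix i show "(k \<le> i \<and> i \<le> N \<and> (s (pflat i \<pi>) \<or> i = N)) = (Suc k \<le> i \<and> i \<le> N \<and> (s (pflat i \<pi>) \<or> i = N))"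
      using a by (cases "i = k") auto
  qed
  thus ?thesis unfolding acc_def by simp
qed

lemma Dw_eq: "Dw N c \<theta> p = (\<Sum>\<pi>\<in>{\<pi>\<in>perms N. pflat (length p) \<pi> = p}. \<theta> ^ c \<pi>)"
  unfolding Dw_def prefixed_def by (rule sum.cong) auto

lemma Dw_pos:
  assumes "\<theta> > 0" "p \<in> perms m" "m \<le> N"
  shows "Dw N c \<theta> p > 0"
proof -
  have "p @ [Suc m..<Suc N] \<in> {\<pi>\<in>perms N. pflat (length p) \<pi> = p}"
    using exists_prefixed[OF assms(2,3)] perms_length[OF assms(2)] by auto
  moreover have "finite {\<pi>\<in>perms N. pflat (length p) \<pi> = p}" using finite_perms by simp
  ultimately show ?thesis unfolding Dw_eq using assms(1)
    by (intro sum_pos2) auto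
qed

lemma strike_num:
  assumes "Dw N c \<theta> p \<noteq> 0"
  shows "(\<Sum>\<pi>\<in>{\<pi>\<in>perms N. winnable N p \<pi>}. \<theta> ^ c \<pi>) = Dw N c \<theta> p * Sstrike N c \<theta> p"
  using assms unfolding Sstrike_def by simp

lemma S_nonneg: "\<theta> > 0 \<Longrightarrow> 0 \<le> Sstrike N c \<theta> p"
  unfolding Sstrike_def Dw_def by (intro divide_nonneg_nonneg sum_nonneg) auto

lemma Sbar_ge_S: "Sstrike N c \<theta> p \<le> Sbar_rec N c \<theta> k p"
  by (cases k) auto

lemma pos_full: "\<theta> > 0 \<Longrightarrow> length p = N \<Longrightarrow> positive N c \<theta> p"
  unfolding positive_def Sopen_def using S_nonneg by simp

lemma ext_prop: "q \<in> ext p \<Longrightarrow> q \<in> perms (Suc (length p)) \<and> pflat (length p) q = p"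
  unfolding ext_def contains_def by auto

lemma finite_ext: "finite (ext p)"
  unfolding ext_def using finite_perms by simp

lemma sbar_closed: "length p = m \<Longrightarrow> m \<le> N \<Longrightarrow> Sbar_rec N c \<theta> (N - m) p = Sclosed N c \<theta> p"
proof -
  assume a: "length p = m" "m \<le> N"
  show ?thesis
  proof (cases "m = N")
    case True thus ?thesis using a unfolding Sclosed_def Sopen_def by simp
  next
    case False
    hence "N - m = Suc (N - Suc m)" using a by simp
    thus ?thesis using a False unfolding Sclosed_def Sopen_def by simp
  qed
qed

lemma strike_case:
  assumes th: "\<theta> > 0" and p: "p \<in> perms m" and m: "m \<le> N" and sp: "s p \<or> m = N"
  shows "(\<Sum>\<pi>\<in>{\<pi>\<in>perms N. pflat m \<pi> = p \<and> W N s m \<pi>}. \<theta> ^ c \<pi>) = Dw N c \<theta> p * Sstrike N c \<theta> p"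
proof -
  have lp: "length p = m" using perms_length[OF p] .
  have "{\<pi>\<in>perms N. pflat m \<pi> = p \<and> W N s m \<pi>} = {\<pi>\<in>perms N. winnable N p \<pi>}"
  proof (intro Collect_cong conj_cong refl)
    fix \<pi> assume "\<pi> \<in> perms N"
    show "(pflat m \<pi> = p \<and> W N s m \<pi>) = winnable N p \<pi>"
    proof (cases "pflat m \<pi> = p")
      case True
      hence "acc N s m \<pi> = m" using acc_here[of m N s \<pi>] m sp by auto
      thus ?thesis using True \<open>\<pi> \<in> perms N\<close> lp unfolding W_def winnable_def prefixed_def by auto
    qed (auto simp: winnable_def prefixed_def lp)
  qed
  thus ?thesis using strike_num Dw_pos[OF th p m] by (metis less_irrefl)
qed

lemma split_case:
  assumes p: "p \<in> perms m" and m: "m < N" and sp: "\<not> s p"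
  shows "(\<Sum>\<pi>\<in>{\<pi>\<in>perms N. pflat m \<pi> = p \<and> W N s m \<pi>}. f \<pi>)
       = (\<Sum>q\<in>ext p. \<Sum>\<pi>\<in>{\<pi>\<in>perms N. pflat (Suc m) \<pi> = q \<and> W N s (Suc m) \<pi>}. f \<pi>)"
proof -
  have lp: "length p = m" using perms_length[OF p] .
  define S where "S = {\<pi>\<in>perms N. pflat m \<pi> = p \<and> W N s m \<pi>}"
  have fS: "finite S" unfolding S_def using finite_perms by simp
  have img: "pflat (Suc m) ` S \<subseteq> ext p"
  proof
    fix q assume "q \<in> pflat (Suc m) ` S"
    then obtain \<pi> where \<pi>: "\<pi> \<in> perms N" "pflat m \<pi> = p" "q = pflat (Suc m) \<pi>" unfolding S_def by auto
    have qperm: "q \<in> perms (Suc m)" using pflat_perm[OF \<pi>(1)] m \<pi>(3) by simp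
    moreover have "pflat m q = p" using \<pi> pflat_pflat[of m "Suc m" \<pi>] by simp
    ultimately show "q \<in> ext p" unfolding ext_def contains_def using lp perms_length[OF qperm] by simp
  qed
  have key: "W N s m \<pi> = W N s (Suc m) \<pi>" if "pflat m \<pi> = p" for \<pi>
    using acc_next[of m N s \<pi>] m sp that unfolding W_def by simp
  have "sum f S = (\<Sum>q\<in>ext p. sum f {x. x \<in> S \<and> pflat (Suc m) x = q})"
    by (rule sum.group[symmetric, OF fS finite_ext img])
  also have "\<dots> = (\<Sum>q\<in>ext p. \<Sum>\<pi>\<in>{\<pi>\<in>perms N. pflat (Suc m) \<pi> = q \<and> W N s (Suc m) \<pi>}. f \<pi>)"
  proof (rule sum.cong[OF refl])
    fix q assume q: "q \<in> ext p"
    have qp: "pflat m \<pi> = p" if "pflat (Suc m) \<pi> = q" for \<pi>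
      using ext_prop[OF q] lp that pflat_pflat[of m "Suc m" \<pi>] by simp
    have "{x. x \<in> S \<and> pflat (Suc m) x = q} = {\<pi>\<in>perms N. pflat (Suc m) \<pi> = q \<and> W N s (Suc m) \<pi>}"
      unfolding S_def using qp key by auto
    thus "sum f {x. x \<in> S \<and> pflat (Suc m) x = q} = (\<Sum>\<pi>\<in>{\<pi>\<in>perms N. pflat (Suc m) \<pi> = q \<and> W N s (Suc m) \<pi>}. f \<pi>)"
      by simp
  qed
  finally show ?thesis unfolding S_def .
qed

lemma claimA:
  assumes th: "\<theta> > 0"
  shows "N - m = k \<Longrightarrow> p \<in> perms m \<Longrightarrow> m \<le> N \<Longrightarrow>
    (\<Sum>\<pi>\<in>{\<pi>\<in>perms N. pflat m \<pi> = p \<and> W N s m \<pi>}. \<theta> ^ c \<pi>) \<le> Dw N c \<theta> p * Sbar_rec N c \<theta> k p"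
proof (induction k arbitrary: m p)
  case 0
  hence "m = N" by simp
  hence "(\<Sum>\<pi>\<in>{\<pi>\<in>perms N. pflat m \<pi> = p \<and> W N s m \<pi>}. \<theta> ^ c \<pi>) = Dw N c \<theta> p * Sstrike N c \<theta> p"
    using strike_case[OF th 0(2,3)] by simp
  also have "\<dots> \<le> Dw N c \<theta> p * Sbar_rec N c \<theta> 0 p"
    by (intro mult_left_mono Sbar_ge_S less_imp_le[OF Dw_pos[OF th 0(2,3)]])
  finally show ?case .
next
  case (Suc k)
  have Dp: "Dw N c \<theta> p > 0" using Dw_pos[OF th Suc(3,4)] .
  show ?case
  proof (cases "s p \<or> m = N")
    case True
    hence "(\<Sum>\<pi>\<in>{\<pi>\<in>perms N. pflat m \<pi> = p \<and> W N s m \<pi>}. \<theta> ^ c \<pi>) = Dw N c \<theta> p * Sstrike N c \<theta> p"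
      using strike_case[OF th Suc(3,4)] by simp
    also have "\<dots> \<le> Dw N c \<theta> p * Sbar_rec N c \<theta> (Suc k) p"
      by (intro mult_left_mono Sbar_ge_S less_imp_le[OF Dp])
    finally show ?thesis .
  next
    case False
    hence mN: "m < N" and sp: "\<not> s p" using Suc(4) by auto
    have lp: "length p = m" using perms_length[OF Suc(3)] .
    have "(\<Sum>\<pi>\<in>{\<pi>\<in>perms N. pflat m \<pi> = p \<and> W N s m \<pi>}. \<theta> ^ c \<pi>)
       = (\<Sum>q\<in>ext p. \<Sum>\<pi>\<in>{\<pi>\<in>perms N. pflat (Suc m) \<pi> = q \<and> W N s (Suc m) \<pi>}. \<theta> ^ c \<pi>)"
      by (rule split_case[where s=s, OF Suc(3) mN sp])
    also have "\<dots> \<le> (\<Sum>q\<in>ext p. Dw N c \<theta> q * Sbar_rec N c \<theta> k q)"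
    proof (rule sum_mono)
      fix q assume "q \<in> ext p"
      hence "q \<in> perms (Suc m)" using ext_prop lp by blast
      thus "(\<Sum>\<pi>\<in>{\<pi>\<in>perms N. pflat (Suc m) \<pi> = q \<and> W N s (Suc m) \<pi>}. \<theta> ^ c \<pi>) \<le> Dw N c \<theta> q * Sbar_rec N c \<theta> k q"
        using Suc.IH[of "Suc m" q] Suc(2) mN by simp
    qed
    also have "\<dots> = Dw N c \<theta> p * ((\<Sum>q\<in>ext p. Dw N c \<theta> q * Sbar_rec N c \<theta> k q) / Dw N c \<theta> p)"
      using Dp by simp
    also have "\<dots> \<le> Dw N c \<theta> p * Sbar_rec N c \<theta> (Suc k) p"
      using Dp by (intro mult_left_mono) auto
    finally show ?thesis .
  qed
qed

lemma minpos_of: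
  assumes p: "p \<in> perms m" and m: "1 \<le> m" "m \<le> N" and pos: "positive N c \<theta> p"
    and h: "\<forall>j. 1 \<le> j \<and> j < m \<longrightarrow> \<not> positive N c \<theta> (pflat j p)"
  shows "p \<in> minpos N c \<theta>"
proof -
  have "p \<in> prefixes N" unfolding prefixes_def using p m by auto
  moreover have "\<not> positive N c \<theta> p'" if pre: "p' \<in> prefixes N" "contains p p'" "p' \<noteq> p" for p'
  proof -
    obtain j where j: "j \<in> {1..N}" "p' \<in> perms j" using pre(1) unfolding prefixes_def by auto
    have lj: "length p' = j" using perms_length[OF j(2)] .
    have jm: "j \<le> m" and pj: "pflat j p = p'" using pre(2) lj perms_length[OF p] unfolding contains_def by auto
    have "j \<noteq> m" using pj pflat_self[OF p] pre(3) by auto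
    thus ?thesis using h jm j(1) pj by auto
  qed
  ultimately show ?thesis unfolding minpos_def using pos by auto
qed

lemma claimB:
  assumes th: "\<theta> > 0"
  shows "N - m = k \<Longrightarrow> p \<in> perms m \<Longrightarrow> 1 \<le> m \<Longrightarrow> m \<le> N \<Longrightarrow>
    (\<forall>j. 1 \<le> j \<and> j < m \<longrightarrow> \<not> positive N c \<theta> (pflat j p)) \<Longrightarrow>
    (\<Sum>\<pi>\<in>{\<pi>\<in>perms N. pflat m \<pi> = p \<and> W N (\<lambda>q. q \<in> minpos N c \<theta>) m \<pi>}. \<theta> ^ c \<pi>) = Dw N c \<theta> p * Sbar_rec N c \<theta> k p"
proof (induction k arbitrary: m p)
  case (0 m p)
  hence mN: "m = N" by simp
  have "length p = N" using perms_length[OF 0(2)] mN by simp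
  hence "positive N c \<theta> p" using pos_full[OF th] by simp
  hence "p \<in> minpos N c \<theta>" using minpos_of[OF 0(2,3,4)] 0(5) by simp
  hence "(\<Sum>\<pi>\<in>{\<pi>\<in>perms N. pflat m \<pi> = p \<and> W N (\<lambda>q. q \<in> minpos N c \<theta>) m \<pi>}. \<theta> ^ c \<pi>) = Dw N c \<theta> p * Sstrike N c \<theta> p"
    using strike_case[OF th 0(2,4)] by simp
  thus ?case using S_nonneg[OF th] by simp
next
  case (Suc k m p)
  have Dp: "Dw N c \<theta> p > 0" using Dw_pos[OF th Suc(3,5)] .
  have lp: "length p = m" using perms_length[OF Suc(3)] .
  have mN: "m < N" using Suc(2) by simp
  have sopen: "Sopen N c \<theta> p = (\<Sum>q\<in>ext p. Dw N c \<theta> q * Sbar_rec N c \<theta> k q) / Dw N c \<theta> p"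
    unfolding Sopen_def using lp mN Suc(2) by (simp add: Suc_diff_Suc[symmetric])
  have sb: "Sbar_rec N c \<theta> (Suc k) p = max (Sstrike N c \<theta> p) (Sopen N c \<theta> p)"
    using sopen by simp
  show ?case
  proof (cases "positive N c \<theta> p")
    case True
    hence "p \<in> minpos N c \<theta>" using minpos_of[OF Suc(3,4,5)] Suc(6) by simp
    hence "(\<Sum>\<pi>\<in>{\<pi>\<in>perms N. pflat m \<pi> = p \<and> W N (\<lambda>q. q \<in> minpos N c \<theta>) m \<pi>}. \<theta> ^ c \<pi>) = Dw N c \<theta> p * Sstrike N c \<theta> p"
      using strike_case[OF th Suc(3,5)] by simp
    thus ?thesis using sb True unfolding positive_def by simp
  next
    case False
    hence np: "p \<notin> minpos N c \<theta>" unfolding minpos_def by auto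
    have "(\<Sum>\<pi>\<in>{\<pi>\<in>perms N. pflat m \<pi> = p \<and> W N (\<lambda>q. q \<in> minpos N c \<theta>) m \<pi>}. \<theta> ^ c \<pi>)
       = (\<Sum>q\<in>ext p. \<Sum>\<pi>\<in>{\<pi>\<in>perms N. pflat (Suc m) \<pi> = q \<and> W N (\<lambda>q. q \<in> minpos N c \<theta>) (Suc m) \<pi>}. \<theta> ^ c \<pi>)"
      by (rule split_case[where s="\<lambda>q. q \<in> minpos N c \<theta>", OF Suc(3) mN]) (use np in simp)
    also have "\<dots> = (\<Sum>q\<in>ext p. Dw N c \<theta> q * Sbar_rec N c \<theta> k q)"
    proof (rule sum.cong[OF refl])
      fix q assume q: "q \<in> ext p"
      hence qperm: "q \<in> perms (Suc m)" and qp: "pflat m q = p" using ext_prop lp by auto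
      have "\<not> positive N c \<theta> (pflat j q)" if "1 \<le> j" "j < Suc m" for j
      proof (cases "j = m")
        case True thus ?thesis using qp False by simp
      next
        case False
        hence "pflat j q = pflat j p" using that qp pflat_pflat[of j m q] by simp
        thus ?thesis using Suc(6) that False by simp
      qed
      thus "(\<Sum>\<pi>\<in>{\<pi>\<in>perms N. pflat (Suc m) \<pi> = q \<and> W N (\<lambda>q. q \<in> minpos N c \<theta>) (Suc m) \<pi>}. \<theta> ^ c \<pi>) = Dw N c \<theta> q * Sbar_rec N c \<theta> k q"
        using Suc.IH[of "Suc m" q] Suc(2) mN qperm by simp
    qed
    also have "\<dots> = Dw N c \<theta> p * Sopen N c \<theta> p"
      using Dp sopen by simp
    finally show ?thesis using sb False unfolding positive_def by simp
  qed
qed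



lemma uniq_aux:
  assumes "\<pi> \<in> perms N" "p1 \<in> minpos N c \<theta>" "p2 \<in> minpos N c \<theta>"
    "prefixed N p1 \<pi>" "prefixed N p2 \<pi>" "length p1 \<le> length p2"
  shows "p1 = p2"
proof (rule ccontr)
  assume ne: "p1 \<noteq> p2"
  have "p1 = pflat (length p1) \<pi>" using assms(4) unfolding prefixed_def by simp
  also have "\<dots> = pflat (length p1) (pflat (length p2) \<pi>)" using pflat_pflat assms(6) by simp
  also have "\<dots> = pflat (length p1) p2" using assms(5) unfolding prefixed_def by simp
  finally have "contains p2 p1" unfolding contains_def using assms(6) by simp
  moreover have "p1 \<in> prefixes N" "positive N c \<theta> p1" using assms(2) unfolding minpos_def by auto
  ultimately show False using assms(3) ne unfolding minpos_def by auto
qed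

lemma uniq:
  assumes "\<pi> \<in> perms N" "p1 \<in> minpos N c \<theta>" "p2 \<in> minpos N c \<theta>"
    "prefixed N p1 \<pi>" "prefixed N p2 \<pi>"
  shows "p1 = p2"
  using uniq_aux[OF assms] uniq_aux[OF assms(1,3,2,5,4)] by (metis nat_le_linear)

lemma exist:
  assumes th: "\<theta> > 0" and \<pi>: "\<pi> \<in> perms N" and N: "N \<ge> 1"
  shows "\<exists>p. p \<in> minpos N c \<theta> \<and> prefixed N p \<pi>"
proof -
  define P where "P = (\<lambda>j. 1 \<le> j \<and> j \<le> N \<and> positive N c \<theta> (pflat j \<pi>))"
  define j where "j = (LEAST j. P j)"
  have "length (pflat N \<pi>) = N" using pflat_perm[OF \<pi>, of N] perms_length by blast
  hence "P N" unfolding P_def using N pos_full[OF th] by simp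
  hence Pj: "P j" unfolding j_def by (rule LeastI)
  have notP: "\<not> P i" if "i < j" for i using that not_less_Least unfolding j_def by blast
  define p where "p = pflat j \<pi>"
  have pp: "p \<in> perms j" unfolding p_def using Pj pflat_perm[OF \<pi>] unfolding P_def by simp
  have "\<forall>i. 1 \<le> i \<and> i < j \<longrightarrow> \<not> positive N c \<theta> (pflat i p)"
  proof (intro allI impI)
    fix i assume i: "1 \<le> i \<and> i < j"
    hence "pflat i p = pflat i \<pi>" unfolding p_def using pflat_pflat[of i j \<pi>] by simp
    thus "\<not> positive N c \<theta> (pflat i p)" using notP[of i] i Pj unfolding P_def by auto
  qed
  hence "p \<in> minpos N c \<theta>" using minpos_of[OF pp] Pj unfolding P_def p_def by auto
  moreover have "prefixed N p \<pi>" unfolding prefixed_def using \<pi> perms_length[OF pp] p_def by simp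
  ultimately show ?thesis by blast
qed

lemma finite_prefixes: "finite (prefixes N)"
  unfolding prefixes_def using finite_perms by simp

lemma finite_minpos: "finite (minpos N c \<theta>)"
  using finite_prefixes[of N] unfolding minpos_def by simp

theorem mainTheorem1:
  fixes N :: nat and c :: "nat list \<Rightarrow> nat" and \<theta> :: real
  assumes "N \<ge> 1" and "\<theta> > 0"
  shows "(\<forall>\<pi>\<in>perms N. \<exists>!p. p \<in> minpos N c \<theta> \<and> prefixed N p \<pi>)
       \<and> (\<forall>s. win_prob N c \<theta> s \<le> win_prob N c \<theta> (\<lambda>q. q \<in> minpos N c \<theta>))
       \<and> win_prob N c \<theta> (\<lambda>q. q \<in> minpos N c \<theta>) = Sclosed N c \<theta> [1]
       \<and> win_prob N c \<theta> (\<lambda>q. q \<in> minpos N c \<theta>) =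
           (\<Sum>p\<in>minpos N c \<theta>. Dw N c \<theta> p * Sstrike N c \<theta> p) / Zsum N c \<theta>"
proof -
  note N = assms(1) and th = assms(2)
  define t where "t = (\<lambda>q. q \<in> minpos N c \<theta>)"
  have P1: "\<forall>\<pi>\<in>perms N. \<exists>!p. p \<in> minpos N c \<theta> \<and> prefixed N p \<pi>"
    using exist[OF th _ N] uniq by blast
  have one: "[1] \<in> perms 1" by (simp add: perms_def)
  have all1: "{\<pi>\<in>perms N. pflat 1 \<pi> = [1]} = perms N"
  proof -
    have "pflat 1 \<pi> = [1]" if "\<pi> \<in> perms N" for \<pi>
    proof -
      have "\<pi> \<noteq> []" using perms_length[OF that] N by auto
      thus ?thesis by (rule pflat_one)
    qed
    thus ?thesis by auto
  qed
  have Z: "Zsum N c \<theta> = Dw N c \<theta> [1]" unfolding Dw_eq Zsum_def using all1 by simp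
  have Zpos: "Zsum N c \<theta> > 0" unfolding Z using Dw_pos[OF th one N] .
  have weq: "{\<pi>\<in>perms N. wins N s \<pi>} = {\<pi>\<in>perms N. pflat 1 \<pi> = [1] \<and> W N s 1 \<pi>}" for s
    using all1 unfolding wins_def W_def accepted_def acc_def by auto
  have sb: "Sbar_rec N c \<theta> (N - 1) [1] = Sclosed N c \<theta> [1]" using sbar_closed[of "[1]" 1 N] N by simp
  have le: "(\<Sum>\<pi>\<in>{\<pi>\<in>perms N. wins N s \<pi>}. \<theta> ^ c \<pi>) \<le> Zsum N c \<theta> * Sclosed N c \<theta> [1]" for s
    unfolding weq Z sb[symmetric] by (rule claimA[OF th _ one N]) simp
  have eq: "(\<Sum>\<pi>\<in>{\<pi>\<in>perms N. wins N t \<pi>}. \<theta> ^ c \<pi>) = Zsum N c \<theta> * Sclosed N c \<theta> [1]"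
    unfolding weq Z sb[symmetric] t_def by (rule claimB[OF th _ one _ N]) auto
  have P3: "win_prob N c \<theta> t = Sclosed N c \<theta> [1]"
    unfolding win_prob_def eq using Zpos by simp
  have P2: "\<forall>s. win_prob N c \<theta> s \<le> win_prob N c \<theta> t"
  proof
    fix s show "win_prob N c \<theta> s \<le> win_prob N c \<theta> t"
    proof -
      have "win_prob N c \<theta> s \<le> Sclosed N c \<theta> [1]"
        unfolding win_prob_def using le[of s] Zpos by (simp add: pos_divide_le_eq mult.commute)
      thus ?thesis using P3 by simp
    qed
  qed
  
  define mp where "mp = (\<lambda>\<pi>. THE p. p \<in> minpos N c \<theta> \<and> prefixed N p \<pi>)"
  have mp: "mp \<pi> \<in> minpos N c \<theta> \<and> prefixed N (mp \<pi>) \<pi>" if "\<pi> \<in> perms N" for \<pi>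
  proof -
    have "\<exists>!p. p \<in> minpos N c \<theta> \<and> prefixed N p \<pi>" using P1 that by blast
    thus ?thesis unfolding mp_def by (rule theI')
  qed
  have mp_eq: "mp \<pi> = p" if "\<pi> \<in> perms N" "p \<in> minpos N c \<theta>" "prefixed N p \<pi>" for \<pi> p
    using uniq[OF that(1) mp[OF that(1), THEN conjunct1] that(2) mp[OF that(1), THEN conjunct2] that(3)] .
  have acc_t: "accepted N t \<pi> = length (mp \<pi>)" if \<pi>: "\<pi> \<in> perms N" for \<pi>
  proof -
    define p where "p = mp \<pi>"
    have pm: "p \<in> minpos N c \<theta>" and pf: "prefixed N p \<pi>" using mp[OF \<pi>] p_def by auto
    obtain j where j: "j \<in> {1..N}" "p \<in> perms j" using pm unfolding minpos_def prefixes_def by auto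
    have lj: "length p = j" using perms_length[OF j(2)] .
    have pj: "pflat j \<pi> = p" using pf lj unfolding prefixed_def by simp
    show ?thesis unfolding accepted_def p_def[symmetric] lj
    proof (rule Least_equality)
      show "1 \<le> j \<and> j \<le> N \<and> (t (pflat j \<pi>) \<or> j = N)" using j pj pm unfolding t_def by auto
    next
      fix y assume y: "1 \<le> y \<and> y \<le> N \<and> (t (pflat y \<pi>) \<or> y = N)"
      show "j \<le> y"
      proof (cases "t (pflat y \<pi>)")
        case True
        have ly: "length (pflat y \<pi>) = y" using perms_length[OF pflat_perm[OF \<pi>, of y]] y by simp
        have "prefixed N (pflat y \<pi>) \<pi>" unfolding prefixed_def ly using \<pi> by simp
        hence "mp \<pi> = pflat y \<pi>" using mp_eq[OF \<pi>] True unfolding t_def by simp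
        thus ?thesis using ly lj p_def by simp
      next
        case False thus ?thesis using y j by simp
      qed
    qed
  qed
  have fS: "finite {\<pi>\<in>perms N. wins N t \<pi>}" using finite_perms by simp
  have img: "mp ` {\<pi>\<in>perms N. wins N t \<pi>} \<subseteq> minpos N c \<theta>" using mp by auto
  have "(\<Sum>\<pi>\<in>{\<pi>\<in>perms N. wins N t \<pi>}. \<theta> ^ c \<pi>)
      = (\<Sum>p\<in>minpos N c \<theta>. sum (\<lambda>\<pi>. \<theta> ^ c \<pi>) {x. x \<in> {\<pi>\<in>perms N. wins N t \<pi>} \<and> mp x = p})"
    by (rule sum.group[symmetric, OF fS finite_minpos img])
  also have "\<dots> = (\<Sum>p\<in>minpos N c \<theta>. Dw N c \<theta> p * Sstrike N c \<theta> p)"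
  proof (rule sum.cong[OF refl])
    fix p assume pm: "p \<in> minpos N c \<theta>"
    obtain j where j: "j \<in> {1..N}" "p \<in> perms j" using pm unfolding minpos_def prefixes_def by auto
    have set: "{x. x \<in> {\<pi>\<in>perms N. wins N t \<pi>} \<and> mp x = p} = {\<pi>\<in>perms N. winnable N p \<pi>}"
    proof (intro equalityI subsetI)
      fix x assume "x \<in> {x. x \<in> {\<pi>\<in>perms N. wins N t \<pi>} \<and> mp x = p}"
      hence x: "x \<in> perms N" "wins N t x" "mp x = p" by auto
      thus "x \<in> {\<pi>\<in>perms N. winnable N p \<pi>}"
        using mp[OF x(1)] acc_t[OF x(1)] unfolding wins_def winnable_def by auto
    next
      fix x assume "x \<in> {\<pi>\<in>perms N. winnable N p \<pi>}"
      hence x: "x \<in> perms N" "prefixed N p x" "x ! (length p - 1) = N" unfolding winnable_def by auto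
      have "mp x = p" using mp_eq[OF x(1) pm x(2)] .
      thus "x \<in> {x. x \<in> {\<pi>\<in>perms N. wins N t \<pi>} \<and> mp x = p}"
        using x acc_t[OF x(1)] unfolding wins_def by auto
    qed
    show "sum (\<lambda>\<pi>. \<theta> ^ c \<pi>) {x. x \<in> {\<pi>\<in>perms N. wins N t \<pi>} \<and> mp x = p} = Dw N c \<theta> p * Sstrike N c \<theta> p"
      unfolding set using strike_num Dw_pos[OF th j(2)] j(1) by (metis atLeastAtMost_iff less_irrefl)
  qed
  finally have P4: "win_prob N c \<theta> t = (\<Sum>p\<in>minpos N c \<theta>. Dw N c \<theta> p * Sstrike N c \<theta> p) / Zsum N c \<theta>"
    unfolding win_prob_def by simp
  show ?thesis using P1 P2 P3 P4 unfolding t_def by blast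
qed

end
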